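(* For $k\in\mathbb{N}$, the formula $\mathsf{F}^{|k\rangle}(X\times\Theta)=\sum_{m,n=0}^\infty\frac{1}{2\pi}\int_{X\times\Theta}e^{i\theta(m-n)}L_{\min\{m,k\}}(r^2)L_{\min\{n,k\}}(r^2)e^{-r^2}\,d(r^2)\,d\theta\,|m\rangle\langle n|$ defines a phase shift covariant phase space observable whose angle margin is the covariant phase observable $\mathsf{F}^{|k\rangle}(\mathbb{R}_+\times\Theta)=\sum_{m,n}c_{mn}\frac{1}{2\pi}\int_\Theta e^{i\theta(m-n)}d\theta\,|m\rangle\langle n|$ with phase matrix $c_{mn}=\delta_{\min\{m,k\},\min\{n,k\}}$. In particular the angle margin of $\mathsf{F}^{|0\rangle}$ is the canonical phase $\mathsf{E}_{\mathrm{can}}$. Its radial margin is $\mathsf{F}^{|k\rangle}(X\times[0,2\pi))=\sum_{m=0}^{k}c_{mm}(X)|m\rangle\langle m|+c_{kk}(X)\sum_{m=k+1}^\infty|m\rangle\langle m|$, where $c_{mm}(X)=\int_X L_m(r^2)^2e^{-r^2}d(r^2)$.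
   Context: $\mathcal{H}\simeq L^2(\mathbb{R})$ with number basis $\{|n\rangle\}$ and number operator $N$. $L_j$ denotes the $j$-th Laguerre polynomial. $\mathbb{C}\simeq\mathbb{R}_+\times[0,2\pi)$ via polar coordinates $re^{i\theta}$, $X\times\Theta=\{re^{i\theta}:r\in X,\theta\in\Theta\}$, and $d(r^2)=2r\,dr$. A phase shift covariant phase space observable is a POVM $\mathsf{P}$ on $\mathcal{B}(\mathbb{C})$ with $e^{i\theta N}\mathsf{P}(X\times\Theta)e^{-i\theta N}=\mathsf{P}(X\times(\Theta\dot{+}\theta))$ ($\dot{+}$ addition mod $2\pi$). The canonical phase is $\mathsf{E}_{\mathrm{can}}(\Theta)=\sum_{m,n}\frac{1}{2\pi}\int_\Theta e^{i(m-n)\theta}d\theta\,|m\rangle\langle n|$. *)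

theory Defs
  imports "HOL-Analysis.Analysis"
begin

definition laguerre :: "nat \<Rightarrow> real \<Rightarrow> real" where
  "laguerre j x = (\<Sum>i\<le>j. real (j choose i) * (-1) ^ i * x ^ i / fact i)"

text \<open>Operators on H = l2(N) are represented by their matrix elements
  A m n = <m|A|n> in the number basis.\<close>
definition psd_matrix :: "(nat \<Rightarrow> nat \<Rightarrow> complex) \<Rightarrow> bool" where
  "psd_matrix A \<longleftrightarrow> (\<forall>F c. finite F \<longrightarrow>
      (\<Sum>m\<in>F. \<Sum>n\<in>F. cnj (c m) * A m n * c n) \<in> \<real> \<and>
      0 \<le> Re (\<Sum>m\<in>F. \<Sum>n\<in>F. cnj (c m) * A m n * c n))"

definition povm :: "'a measure \<Rightarrow> ('a set \<Rightarrow> nat \<Rightarrow> nat \<Rightarrow> complex) \<Rightarrow> bool" where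
  "povm M P \<longleftrightarrow>
     (\<forall>A \<in> sets M. psd_matrix (P A)) \<and>
     (\<forall>m n. P (space M) m n = (if m = n then 1 else 0)) \<and>
     (\<forall>B :: nat \<Rightarrow> 'a set. range B \<subseteq> sets M \<longrightarrow> disjoint_family B \<longrightarrow>
        (\<forall>m n. (\<lambda>i. P (B i) m n) sums P (\<Union>i. B i) m n))"

definition polar :: "real set \<Rightarrow> real set \<Rightarrow> complex set" where
  "polar X \<Theta> = {complex_of_real r * cis t | r t. r \<in> X \<and> t \<in> \<Theta>}"

definition shift_mod :: "real set \<Rightarrow> real \<Rightarrow> real set" where
  "shift_mod \<Theta> \<theta> = {t \<in> {0..<2*pi}. \<exists>s\<in>\<Theta>. \<exists>j::int. t = s + \<theta> + 2 * pi * of_int j}"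

definition cov_phase_space_obs :: "(complex set \<Rightarrow> nat \<Rightarrow> nat \<Rightarrow> complex) \<Rightarrow> bool" where
  "cov_phase_space_obs P \<longleftrightarrow> povm (borel :: complex measure) P \<and>
     (\<forall>X \<Theta> \<theta> m n. X \<in> sets borel \<longrightarrow> X \<subseteq> {0..} \<longrightarrow>
        \<Theta> \<in> sets borel \<longrightarrow> \<Theta> \<subseteq> {0..<2*pi} \<longrightarrow>
        P (polar X (shift_mod \<Theta> \<theta>)) m n
          = cis (\<theta> * of_int (int m - int n)) * P (polar X \<Theta>) m n)"

definition cov_phase_obs :: "(real set \<Rightarrow> nat \<Rightarrow> nat \<Rightarrow> complex) \<Rightarrow> bool" where
  "cov_phase_obs E \<longleftrightarrow> povm (restrict_space borel {0..<2*pi}) E \<and>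
     (\<forall>\<Theta> \<theta> m n. \<Theta> \<in> sets borel \<longrightarrow> \<Theta> \<subseteq> {0..<2*pi} \<longrightarrow>
        E (shift_mod \<Theta> \<theta>) m n = cis (\<theta> * of_int (int m - int n)) * E \<Theta> m n)"

definition E_can :: "real set \<Rightarrow> nat \<Rightarrow> nat \<Rightarrow> complex" where
  "E_can \<Theta> m n = complex_of_real (1 / (2*pi)) *
     (LINT t:\<Theta>|lborel. cis (of_int (int m - int n) * t))"

text \<open>The observable F^{|k>}, with the integral over Z taken in polar coordinates
  (r,theta), r >= 0, 0 <= theta < 2 pi, against d(r^2) d theta = 2 r dr d theta.\<close>
definition Fk :: "nat \<Rightarrow> complex set \<Rightarrow> nat \<Rightarrow> nat \<Rightarrow> complex" where
  "Fk k Z m n = complex_of_real (1 / (2*pi)) *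
     (LINT p:{p :: real \<times> real. 0 \<le> fst p \<and> 0 \<le> snd p \<and> snd p < 2*pi \<and>
                complex_of_real (fst p) * cis (snd p) \<in> Z}|lborel.
        cis (snd p * of_int (int m - int n)) *
        complex_of_real (laguerre (min m k) ((fst p)^2) * laguerre (min n k) ((fst p)^2)
                          * exp (- ((fst p)^2)) * (2 * fst p)))"

definition cdiag :: "nat \<Rightarrow> real set \<Rightarrow> real" where
  "cdiag m X = (LINT r:X|lborel. (laguerre m (r^2))^2 * exp (- (r^2)) * (2 * r))"

end

theory Submission
  imports Defs "HOL-Probability.Distributions"
begin


lemma altS:
  "(\<Sum>i\<le>a. (-1)^i * real (a choose i) * real (i choose l)) = (if l = a then (-1)^a else 0)"
proof (cases "l \<le> a")
  case False
  then show ?thesis by (intro trans[OF sum.neutral]) auto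
next
  case True
  have "(\<Sum>i\<le>a. (-1)^i * real (a choose i) * real (i choose l))
      = (\<Sum>i\<in>{l..a}. (-1)^i * real (a choose i) * real (i choose l))"
    by (rule sum.mono_neutral_right) auto
  also have "\<dots> = (\<Sum>t\<in>{0..a-l}. (-1)^(t+l) * real (a choose (t+l)) * real ((t+l) choose l))"
    using sum.shift_bounds_cl_nat_ivl[of "\<lambda>i. (-1)^i * real (a choose i) * real (i choose l)" 0 l "a-l"] True
    by simp
  also have "\<dots> = (\<Sum>t\<in>{0..a-l}. (-1)^l * real (a choose l) * ((-1)^t * real ((a-l) choose t)))"
  proof (rule sum.cong[OF refl])
    fix t assume t: "t \<in> {0..a-l}"
    have "(a choose (t+l)) * ((t+l) choose l) = (a choose l) * ((a - l) choose (t+l-l))"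
      using choose_mult[of l "t+l" a] t True by auto
    hence "real (a choose (t+l)) * real ((t+l) choose l) = real (a choose l) * real ((a-l) choose t)"
      by (metis add_diff_cancel_right' of_nat_mult)
    thus "(-1)^(t+l) * real (a choose (t+l)) * real ((t+l) choose l) = (-1)^l * real (a choose l) * ((-1)^t * real ((a-l) choose t))"
      by (simp add: power_add algebra_simps)
  qed
  also have "\<dots> = (-1)^l * real (a choose l) * (\<Sum>t\<le>a-l. (-1)^t * real ((a-l) choose t))"
    by (simp add: sum_distrib_left atLeast0AtMost)
  also have "\<dots> = (if l = a then (-1)^a else 0)"
  proof (cases "l = a")
    case True thus ?thesis by simp
  next
    case False
    hence "(\<Sum>t\<le>a-l. (-1)^t * real ((a-l) choose t)) = 0"
      using \<open>l \<le> a\<close> by (intro choose_alternating_sum) auto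
    thus ?thesis using False by simp
  qed
  finally show ?thesis .
qed

lemma choose_add_vander: "real ((i + j) choose j) = (\<Sum>l\<le>j. real (i choose l) * real (j choose l))"
proof -
  have "(\<Sum>k\<le>j. (i choose k) * (j choose (j - k))) = (i + j) choose j" by (rule vandermonde)
  moreover have "(\<Sum>k\<le>j. (i choose k) * (j choose (j - k))) = (\<Sum>k\<le>j. (i choose k) * (j choose k))"
    by (intro sum.cong refl) (simp add: binomial_symmetric[symmetric])
  ultimately have "(i + j) choose j = (\<Sum>k\<le>j. (i choose k) * (j choose k))" by simp
  hence "real ((i + j) choose j) = real (\<Sum>k\<le>j. (i choose k) * (j choose k))" by simp
  thus ?thesis by simp
qed

lemma altR:
  "(\<Sum>i\<le>a. (-1)^i * real (a choose i) * real ((i+j) choose j)) = (-1)^a * real (j choose a)"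
proof -
  have "(\<Sum>i\<le>a. (-1)^i * real (a choose i) * real ((i+j) choose j))
     = (\<Sum>i\<le>a. \<Sum>l\<le>j. real (j choose l) * ((-1)^i * real (a choose i) * real (i choose l)))"
    by (simp add: choose_add_vander sum_distrib_left algebra_simps)
  also have "\<dots> = (\<Sum>l\<le>j. real (j choose l) * (\<Sum>i\<le>a. (-1)^i * real (a choose i) * real (i choose l)))"
    by (subst sum.swap) (simp add: sum_distrib_left)
  also have "\<dots> = (\<Sum>l\<le>j. real (j choose l) * (if l = a then (-1)^a else 0))"
    by (simp add: altS)
  also have "\<dots> = (-1)^a * real (j choose a)"
    by (cases "a \<le> j") (auto simp: sum.delta' if_distrib cong: if_cong)
  finally show ?thesis .
qed

definition lc :: "nat \<Rightarrow> nat \<Rightarrow> real" where "lc a i = real (a choose i) * (-1)^i / fact i"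

lemma orth_sum: "(\<Sum>j\<le>b. \<Sum>i\<le>a. lc a i * lc b j * fact (i+j)) = (if a = b then 1 else 0)"
proof -
  have fj: "fact (i+j) / fact i = fact j * real ((i+j) choose j)" for i j :: nat
  proof -
    have "real (fact j * fact (i + j - j) * ((i+j) choose j)) = real (fact (i+j))"
      using binomial_fact_lemma[of j "i+j"] by simp
    hence "fact j * fact i * real ((i+j) choose j) = (fact (i+j) :: real)"
      by (simp only: of_nat_mult of_nat_fact) simp
    thus ?thesis by (simp add: field_simps)
  qed
  have "(\<Sum>j\<le>b. \<Sum>i\<le>a. lc a i * lc b j * fact (i+j))
      = (\<Sum>j\<le>b. real (b choose j) * (-1)^j * (\<Sum>i\<le>a. (-1)^i * real (a choose i) * real ((i+j) choose j)))"
  proof (intro sum.cong refl)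
    fix j assume "j \<in> {..b}"
    show "(\<Sum>i\<le>a. lc a i * lc b j * fact (i+j)) = real (b choose j) * (-1)^j * (\<Sum>i\<le>a. (-1)^i * real (a choose i) * real ((i+j) choose j))"
      unfolding sum_distrib_left
    proof (intro sum.cong refl)
      fix i assume "i \<in> {..a}"
      have "fact (i+j) = fact i * (fact j * real ((i+j) choose j))"
        using fj[of i j] by (simp add: field_simps)
      thus "lc a i * lc b j * fact (i+j) = real (b choose j) * (-1)^j * ((-1)^i * real (a choose i) * real ((i+j) choose j))"
        by (simp add: lc_def)
    qed
  qed
  also have "\<dots> = (-1)^a * (\<Sum>j\<le>b. (-1)^j * real (b choose j) * real (j choose a))"
    by (simp only: altR) (simp add: sum_distrib_left algebra_simps)
  also have "\<dots> = (if a = b then 1 else 0)"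
    by (simp add: altS)
  finally show ?thesis .
qed



definition G :: "nat \<Rightarrow> nat \<Rightarrow> real \<Rightarrow> real" where
  "G a b r = laguerre a (r^2) * laguerre b (r^2) * exp (- (r^2)) * (2 * r)"

lemma moment:
  "has_bochner_integral lborel (\<lambda>r::real. indicator {0..} r *\<^sub>R ((r^2)^n * exp (- (r^2)) * (2 * r))) (fact n)"
proof -
  have "has_bochner_integral lborel (\<lambda>x::real. 2 * (indicator {0..} x *\<^sub>R (exp (-x\<^sup>2)*x^(2 * n + 1)))) (2 * (fact n / 2))"
    by (intro has_bochner_integral_mult_right gaussian_moment_odd_pos)
  moreover have "(\<lambda>x::real. 2 * (indicator {0..} x *\<^sub>R (exp (-x\<^sup>2)*x^(2 * n + 1)))) =
     (\<lambda>r::real. indicator {0..} r *\<^sub>R ((r^2)^n * exp (- (r^2)) * (2 * r)))"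
    by (auto simp: fun_eq_iff power_mult power_add)
  ultimately show ?thesis by simp
qed

lemma laguerre_lc: "laguerre a x = (\<Sum>i\<le>a. lc a i * x^i)"
  unfolding laguerre_def lc_def by (simp add: field_simps)

lemma radial_orth:
  "has_bochner_integral lborel (\<lambda>r::real. indicator {0..} r *\<^sub>R G a b r) (if a = b then 1 else 0)"
proof -
  have eq: "(\<lambda>r::real. indicator {0..} r *\<^sub>R G a b r) =
     (\<lambda>r. \<Sum>j\<le>b. \<Sum>i\<le>a. lc a i * lc b j * (indicator {0..} r *\<^sub>R ((r^2)^(i+j) * exp (- (r^2)) * (2 * r))))"
    by (auto simp: fun_eq_iff G_def laguerre_lc sum_distrib_left sum_distrib_right power_add algebra_simps)
  have "has_bochner_integral lborel
     (\<lambda>r. \<Sum>j\<le>b. \<Sum>i\<le>a. lc a i * lc b j * (indicator {0..} r *\<^sub>R ((r^2)^(i+j) * exp (- (r^2)) * (2 * r))))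
     (\<Sum>j\<le>b. \<Sum>i\<le>a. lc a i * lc b j * fact (i+j))"
    by (intro has_bochner_integral_sum has_bochner_integral_mult_right moment)
  thus ?thesis unfolding eq orth_sum .
qed

lemma G_integrable: "set_integrable lborel {0..} (G a b)"
  using radial_orth[of a b] unfolding set_integrable_def by (rule integrable.intros)

lemma G_orth: "(LINT r:{0..}|lborel. G a b r) = (if a = b then 1 else 0)"
  using radial_orth[of a b] unfolding set_lebesgue_integral_def by (rule has_bochner_integral_integral_eq)



lemma sint_meas: "set_integrable M A f \<Longrightarrow> set_borel_measurable M A f"
  unfolding set_integrable_def set_borel_measurable_def by (rule borel_measurable_integrable)

lemma prod_int:
  fixes u v :: "real \<Rightarrow> complex"
  assumes u: "integrable lborel u" and v: "integrable lborel v"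
  shows "integrable lborel (\<lambda>p::real\<times>real. u (fst p) * v (snd p))"
    and "integral\<^sup>L lborel (\<lambda>p::real\<times>real. u (fst p) * v (snd p)) = integral\<^sup>L lborel u * integral\<^sup>L lborel v"
proof -
  have um[measurable]: "u \<in> borel_measurable lborel" using u by auto
  have vm[measurable]: "v \<in> borel_measurable lborel" using v by auto
  have int: "integrable (lborel \<Otimes>\<^sub>M lborel) (\<lambda>p::real\<times>real. u (fst p) * v (snd p))"
  proof (rule lborel_pair.Fubini_integrable)
    show "(\<lambda>p::real\<times>real. u (fst p) * v (snd p)) \<in> borel_measurable (lborel \<Otimes>\<^sub>M lborel)"
      by measurable
    have "(\<lambda>x. \<integral> y. norm (u (fst (x, y)) * v (snd (x, y))) \<partial>lborel) = (\<lambda>x. norm (u x) * \<integral> y. norm (v y) \<partial>lborel)"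
      by (simp add: norm_mult)
    moreover have "integrable lborel (\<lambda>x. norm (u x) * \<integral> y. norm (v y) \<partial>lborel)"
      using u by (intro integrable_mult_left integrable_norm)
    ultimately show "integrable lborel (\<lambda>x. \<integral> y. norm (u (fst (x, y)) * v (snd (x, y))) \<partial>lborel)"
      by simp
    show "AE x in lborel. integrable lborel (\<lambda>y. u (fst (x, y)) * v (snd (x, y)))"
      using v by (intro AE_I2) (simp add: integrable_mult_right)
  qed
  thus "integrable lborel (\<lambda>p::real\<times>real. u (fst p) * v (snd p))"
    by (simp add: lborel_prod)
  have "integral\<^sup>L (lborel \<Otimes>\<^sub>M lborel) (\<lambda>p::real\<times>real. u (fst p) * v (snd p))
      = (\<integral>x. (\<integral>y. u (fst (x,y)) * v (snd (x,y)) \<partial>lborel) \<partial>lborel)"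
    using lborel_pair.integral_fst'[OF int] by simp
  also have "\<dots> = integral\<^sup>L lborel u * integral\<^sup>L lborel v"
    by simp
  finally show "integral\<^sup>L lborel (\<lambda>p::real\<times>real. u (fst p) * v (snd p)) = integral\<^sup>L lborel u * integral\<^sup>L lborel v"
    by (simp add: lborel_prod)
qed

lemma set_prod_int:
  fixes f :: "real \<Rightarrow> complex" and g :: "real \<Rightarrow> real"
  assumes g: "set_integrable lborel A g" and f: "set_integrable lborel T f"
  shows "set_integrable lborel (A \<times> T) (\<lambda>p. f (snd p) * complex_of_real (g (fst p)))"
    and "(LINT p:(A \<times> T)|lborel. f (snd p) * complex_of_real (g (fst p)))
          = (LINT t:T|lborel. f t) * complex_of_real (LINT r:A|lborel. g r)"
proof -
  define u where "u x = complex_of_real (indicator A x *\<^sub>R g x)" for x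
  define v where "v y = indicator T y *\<^sub>R f y" for y
  have u: "integrable lborel u" using g unfolding u_def set_integrable_def by (rule integrable_of_real)
  have v: "integrable lborel v" using f unfolding v_def set_integrable_def by simp
  have eq: "(\<lambda>p. indicator (A \<times> T) p *\<^sub>R (f (snd p) * complex_of_real (g (fst p)))) = (\<lambda>p. u (fst p) * v (snd p))"
    by (auto simp: fun_eq_iff u_def v_def indicator_times split: split_indicator)
  show "set_integrable lborel (A \<times> T) (\<lambda>p. f (snd p) * complex_of_real (g (fst p)))"
    unfolding set_integrable_def eq by (rule prod_int(1)[OF u v])
  have "(LINT p:(A \<times> T)|lborel. f (snd p) * complex_of_real (g (fst p))) = integral\<^sup>L lborel u * integral\<^sup>L lborel v"
    unfolding set_lebesgue_integral_def eq by (rule prod_int(2)[OF u v])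
  also have "integral\<^sup>L lborel u = complex_of_real (LINT r:A|lborel. g r)"
    unfolding u_def set_lebesgue_integral_def by (rule integral_complex_of_real)
  also have "integral\<^sup>L lborel v = (LINT t:T|lborel. f t)"
    unfolding v_def set_lebesgue_integral_def by simp
  finally show "(LINT p:(A \<times> T)|lborel. f (snd p) * complex_of_real (g (fst p)))
          = (LINT t:T|lborel. f t) * complex_of_real (LINT r:A|lborel. g r)" by simp
qed

lemma cis_int_Icc: "set_integrable lborel {a..b} (\<lambda>t. cis (t * d))"
  unfolding set_integrable_def
  by (intro borel_integrable_compact) (auto intro!: continuous_intros)

lemma cis_int: "T \<in> sets borel \<Longrightarrow> T \<subseteq> {a..b} \<Longrightarrow> set_integrable lborel T (\<lambda>t. cis (t * d))"
  by (rule set_integrable_subset[OF cis_int_Icc]) auto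

lemma J_full: "(LINT t:{0..<2*pi}|lborel. cis (t * of_int n)) = (if n = 0 then 2*pi else 0)"
proof -
  have "(LINT t:{0..<2*pi}|lborel. cis (t * of_int n)) = (LINT t:{0..2*pi}|lborel. cis (t * of_int n))"
  proof (rule set_integral_cong_set)
    show "set_borel_measurable lborel {0..2*pi} (\<lambda>t. cis (t * of_int n))"
      "set_borel_measurable lborel {0..<2*pi} (\<lambda>t. cis (t * of_int n))"
      by (auto intro!: sint_meas cis_int[where a=0 and b="2*pi"])
    show "AE x in lborel. (x \<in> {0..2*pi}) = (x \<in> {0..<2*pi})"
      using AE_lborel_singleton[of "2*pi"] by eventually_elim auto
  qed
  also have "\<dots> = (LBINT t=ereal 0..ereal (2*pi). cis (t * of_int n))"
    by (rule interval_integral_Icc[symmetric]) simp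
  also have "\<dots> = (if n = 0 then 2*pi else 0)"
  proof (cases "n = 0")
    case True
    have "(LBINT t=ereal 0..ereal (2*pi). cis (t * of_int n)) = complex_of_real (2*pi) - complex_of_real 0"
      by (rule interval_integral_FTC_finite)
         (auto simp: True intro!: continuous_intros derivative_eq_intros simp: has_vector_derivative_def fun_eq_iff scaleR_conv_of_real)
    thus ?thesis using True by simp
  next
    case False
    have "(LBINT t=ereal 0..ereal (2*pi). cis (t * of_int n)) = cis (2*pi * of_int n) / (\<i> * of_int n) - cis (0 * of_int n) / (\<i> * of_int n)"
    proof (rule interval_integral_FTC_finite)
      show "continuous_on {min 0 (2 * pi)..max 0 (2 * pi)} (\<lambda>t. cis (t * real_of_int n))"
        by (auto intro!: continuous_intros)
      fix x :: real
      have "((\<lambda>t. cis (t * of_int n)) has_derivative (\<lambda>h. (h * of_int n) *\<^sub>R (\<i> * cis (x * of_int n)))) (at x within {min 0 (2 * pi)..max 0 (2 * pi)})"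
        by (intro has_derivative_cis derivative_eq_intros) auto
      hence "((\<lambda>t. cis (t * of_int n)) has_vector_derivative (of_int n * (\<i> * cis (x * of_int n)))) (at x within {min 0 (2 * pi)..max 0 (2 * pi)})"
        unfolding has_vector_derivative_def by (simp add: scaleR_conv_of_real algebra_simps)
      hence "((\<lambda>t. cis (t * of_int n) / (\<i> * of_int n)) has_vector_derivative ((of_int n * (\<i> * cis (x * of_int n))) / (\<i> * of_int n))) (at x within {min 0 (2 * pi)..max 0 (2 * pi)})"
        by (rule has_vector_derivative_divide)
      thus "((\<lambda>t. cis (t * of_int n) / (\<i> * of_int n)) has_vector_derivative cis (x * of_int n)) (at x within {min 0 (2 * pi)..max 0 (2 * pi)})"
        using False by simp
    qed
    also have "cis (2*pi * of_int n) = 1" by simp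
    finally show ?thesis using False by simp
  qed
  finally show ?thesis .
qed



definition SZ :: "complex set \<Rightarrow> (real \<times> real) set" where
  "SZ Z = {p. 0 \<le> fst p \<and> 0 \<le> snd p \<and> snd p < 2*pi \<and> complex_of_real (fst p) * cis (snd p) \<in> Z}"

definition phi :: "nat \<Rightarrow> nat \<Rightarrow> nat \<Rightarrow> real \<times> real \<Rightarrow> complex" where
  "phi k m n p = cis (snd p * of_int (int m - int n)) * complex_of_real (G (min m k) (min n k) (fst p))"

lemma Fk_alt: "Fk k Z m n = complex_of_real (1/(2*pi)) * (LINT p:SZ Z|lborel. phi k m n p)"
  by (simp add: Fk_def SZ_def phi_def G_def)

lemma phi_int_D: "set_integrable lborel ({0..} \<times> {0..<2*pi}) (phi k m n)"
  unfolding phi_def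
  by (rule set_prod_int(1)[OF G_integrable cis_int[where a=0 and b="2*pi"]]) auto

lemma SZ_sub: "SZ Z \<subseteq> {0..} \<times> {0..<2*pi}"
  by (auto simp: SZ_def)

lemma polmap_meas: "(\<lambda>p::real\<times>real. complex_of_real (fst p) * cis (snd p)) \<in> borel_measurable borel"
  by (intro borel_measurable_continuous_onI continuous_intros)

lemma times_meas: "X \<in> sets borel \<Longrightarrow> T \<in> sets borel \<Longrightarrow> X \<times> T \<in> sets (lborel :: (real\<times>real) measure)"
proof -
  assume "X \<in> sets borel" "T \<in> sets borel"
  hence "X \<times> T \<in> sets ((lborel::real measure) \<Otimes>\<^sub>M (lborel::real measure))" by (intro pair_measureI) (simp_all only: sets_lborel)
  thus ?thesis by (simp only: lborel_prod)
qed

lemma SZ_meas: "Z \<in> sets borel \<Longrightarrow> SZ Z \<in> sets lborel"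
proof -
  assume Z: "Z \<in> sets borel"
  have "SZ Z = ({0..} \<times> {0..<2*pi}) \<inter> ((\<lambda>p::real\<times>real. complex_of_real (fst p) * cis (snd p)) -` Z \<inter> space borel)"
    by (auto simp: SZ_def)
  also have "\<dots> \<in> sets lborel"
    using measurable_sets[OF polmap_meas Z] times_meas[of "{0..}" "{0..<2*pi}"] by auto
  finally show ?thesis .
qed

lemma AE_fst: "AE p in (lborel::(real\<times>real) measure). fst p \<noteq> 0"
proof -
  have "{0::real} \<times> (UNIV::real set) \<in> null_sets (lborel \<Otimes>\<^sub>M lborel)"
    by (auto simp: null_sets_def lborel.emeasure_pair_measure_Times intro!: pair_measureI)
  hence N: "{0::real} \<times> (UNIV::real set) \<in> null_sets lborel" by (simp add: lborel_prod)
  show ?thesis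
    by (rule AE_I'[OF N]) auto
qed

lemma cis_inj:
  assumes "0 \<le> s" "s < 2*pi" "0 \<le> t" "t < 2*pi" "cis s = cis t"
  shows "s = t"
proof -
  have "sin s = sin t \<and> cos s = cos t" using assms(5) by (metis cis.sel(1) cis.sel(2))
  then obtain n :: int where n: "s = t + 2 * pi * n" using sin_cos_eq_iff by blast
  have h: "(2*pi) * real_of_int n < (2*pi) * 1" "(2*pi) * (-1) < (2*pi) * real_of_int n" using n assms by linarith+
  have p: "0 < 2*pi" by simp
  have "real_of_int n < 1" "-1 < real_of_int n" using h p mult_less_cancel_left_pos by blast+
  hence "n < 1" "-1 < n" by linarith+
  hence "n = 0" by simp
  thus ?thesis using n by simp
qed

lemma SZ_polar:
  assumes X: "X \<subseteq> {0..}" and T: "T \<subseteq> {0..<2*pi}"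
  shows "SZ (polar X T) = (X \<times> T - {p. fst p = 0}) \<union> (if 0 \<in> X \<and> T \<noteq> {} then {0} \<times> {0..<2*pi} else {})"
proof (intro set_eqI iffI)
  fix p :: "real \<times> real"
  assume p: "p \<in> SZ (polar X T)"
  obtain r t where rt: "p = (r, t)" by fastforce
  from p rt obtain r' t' where r': "r' \<in> X" "t' \<in> T" and eq: "complex_of_real r * cis t = complex_of_real r' * cis t'"
    and r0: "0 \<le> r" and t0: "0 \<le> t" "t < 2*pi"
    by (auto simp: SZ_def polar_def)
  show "p \<in> (X \<times> T - {p. fst p = 0}) \<union> (if 0 \<in> X \<and> T \<noteq> {} then {0} \<times> {0..<2*pi} else {})"
  proof (cases "r = 0")
    case True
    hence "complex_of_real r' * cis t' = 0" using eq by simp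
    hence "r' = 0" by simp
    thus ?thesis using True rt r' t0 by auto
  next
    case False
    have "norm (complex_of_real r * cis t) = norm (complex_of_real r' * cis t')" using eq by simp
    hence rr: "r = r'" using r0 r' X by (auto simp: norm_mult)
    hence "cis t = cis t'" using eq False by simp
    hence "t = t'" using t0 r'(2) T by (intro cis_inj) auto
    thus ?thesis using rr rt r' False by auto
  qed
next
  fix p :: "real \<times> real"
  assume p: "p \<in> (X \<times> T - {p. fst p = 0}) \<union> (if 0 \<in> X \<and> T \<noteq> {} then {0} \<times> {0..<2*pi} else {})"
  obtain r t where rt: "p = (r, t)" by fastforce
  show "p \<in> SZ (polar X T)"
  proof (cases "r = 0")
    case True
    with p rt have "0 \<in> X" "T \<noteq> {}" "0 \<le> t" "t < 2*pi" by (auto split: if_splits)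
    then obtain t' where "t' \<in> T" by auto
    hence "complex_of_real 0 * cis t' \<in> polar X T" using \<open>0 \<in> X\<close> unfolding polar_def by blast
    thus ?thesis using True rt \<open>0 \<le> t\<close> \<open>t < 2*pi\<close> by (simp add: SZ_def)
  next
    case False
    with p rt have "r \<in> X" "t \<in> T" by (auto split: if_splits)
    thus ?thesis using rt X T unfolding SZ_def polar_def by auto
  qed
qed

lemma SZ_polar_meas:
  assumes "X \<in> sets borel" "X \<subseteq> {0..}" "T \<in> sets borel" "T \<subseteq> {0..<2*pi}"
  shows "SZ (polar X T) \<in> sets lborel"
proof -
  have a: "X \<times> T \<in> sets lborel" using assms by (intro times_meas)
  have b: "{p::real\<times>real. fst p = 0} \<in> sets lborel"
  proof -
    have "{p::real\<times>real. fst p = 0} = {0} \<times> UNIV" by auto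
    thus ?thesis using times_meas[of "{0}" UNIV] by simp
  qed
  have c: "{0::real} \<times> {0..<2*pi::real} \<in> sets lborel" by (intro times_meas) auto
  show ?thesis unfolding SZ_polar[OF assms(2,4)] using a b c by auto
qed

lemma SZ_polar_int:
  assumes X: "X \<in> sets borel" "X \<subseteq> {0..}" and T: "T \<in> sets borel" "T \<subseteq> {0..<2*pi}"
  shows "(LINT p:SZ (polar X T)|lborel. phi k m n p) = (LINT p:(X \<times> T)|lborel. phi k m n p)"
proof (rule set_integral_cong_set)
  show "set_borel_measurable lborel (X \<times> T) (phi k m n)"
    using X T by (intro sint_meas set_integrable_subset[OF phi_int_D] times_meas) auto
  show "set_borel_measurable lborel (SZ (polar X T)) (phi k m n)"
    using X T by (intro sint_meas set_integrable_subset[OF phi_int_D] SZ_polar_meas SZ_sub) auto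
  show "AE x in lborel. (x \<in> X \<times> T) = (x \<in> SZ (polar X T))"
    using AE_fst by eventually_elim (auto simp: SZ_polar[OF X(2) T(2)])

qed

lemma Fk_polar:
  assumes X: "X \<in> sets borel" "X \<subseteq> {0..}" and T: "T \<in> sets borel" "T \<subseteq> {0..<2*pi}"
  shows "Fk k (polar X T) m n = complex_of_real (1/(2*pi)) * (LINT t:T|lborel. cis (t * of_int (int m - int n)))
             * complex_of_real (LINT r:X|lborel. G (min m k) (min n k) r)"
proof -
  have "(LINT p:(X \<times> T)|lborel. phi k m n p) = (LINT t:T|lborel. cis (t * of_int (int m - int n)))
             * complex_of_real (LINT r:X|lborel. G (min m k) (min n k) r)"
    unfolding phi_def
    by (rule set_prod_int(2)[OF set_integrable_subset[OF G_integrable] cis_int[where a=0 and b="2*pi"]])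
       (use X T in auto)
  thus ?thesis unfolding Fk_alt SZ_polar_int[OF assms] by simp
qed



lemma set_integral_sums:
  fixes f :: "_ \<Rightarrow> 'a::{banach, second_countable_topology}"
  assumes A: "\<And>i. A i \<in> sets M" and dj: "disjoint_family A" and int: "set_integrable M (\<Union>i. A i) f"
  shows "(\<lambda>i. LINT x:A i|M. f x) sums (LINT x:(\<Union>i. A i)|M. f x)"
proof -
  define B where "B n = (\<Union>i\<in>{..<n}. A i)" for n
  have Bs: "B n \<in> sets M" for n unfolding B_def using A by auto
  have inc: "incseq B" unfolding B_def incseq_def by (intro allI impI UN_mono) auto
  have UB: "(\<Union>n. B n) = (\<Union>i. A i)" unfolding B_def by auto
  have Ai: "set_integrable M (A i) f" for i by (rule set_integrable_subset[OF int A]) auto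
  have lim: "(\<lambda>n. LINT x:B n|M. f x) \<longlonglongrightarrow> (LINT x:(\<Union>n. B n)|M. f x)"
    by (rule set_integral_cont_up[OF Bs inc]) (simp add: UB int)
  have fin: "(LINT x:B n|M. f x) = (\<Sum>i<n. LINT x:A i|M. f x)" for n
    unfolding B_def
    by (rule set_integral_finite_Union) (use dj Ai A in \<open>auto simp: disjoint_family_on_def\<close>)
  show ?thesis unfolding sums_def using lim by (simp add: fin UB)
qed

lemma psd_int:
  assumes S: "S \<in> sets lborel" "S \<subseteq> {0..} \<times> {0..<2*pi}"
  shows "psd_matrix (\<lambda>m n. complex_of_real (1/(2*pi)) * (LINT p:S|lborel. phi k m n p))"
  unfolding psd_matrix_def
proof (intro allI impI)
  fix F :: "nat set" and c :: "nat \<Rightarrow> complex"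
  assume F: "finite F"
  define K where "K = complex_of_real (1/(2*pi))"
  define L where "L n r = laguerre (min n k) (r^2)" for n r
  define w where "w r = exp (- (r^2)) * (2 * r)" for r :: real
  define a where "a p n = c n * cis (- (snd p * real n)) * complex_of_real (L n (fst p))" for p n
  define h where "h p = w (fst p) * (cmod (\<Sum>n\<in>F. a p n))^2" for p
  have int: "set_integrable lborel S (phi k m n)" for m n
    by (rule set_integrable_subset[OF phi_int_D S(1) S(2)])
  have pw: "(\<Sum>m\<in>F. \<Sum>n\<in>F. cnj (c m) * phi k m n p * c n) = complex_of_real (h p)" for p
  proof -
    have "(\<Sum>m\<in>F. \<Sum>n\<in>F. cnj (c m) * phi k m n p * c n)
        = (\<Sum>m\<in>F. \<Sum>n\<in>F. complex_of_real (w (fst p)) * (cnj (a p m) * a p n))"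
    proof (intro sum.cong refl)
      fix m n
      have "cis (snd p * of_int (int m - int n)) = cis (snd p * real m) * cis (- (snd p * real n))"
        by (simp add: cis_mult algebra_simps)
      thus "cnj (c m) * phi k m n p * c n = complex_of_real (w (fst p)) * (cnj (a p m) * a p n)"
        by (simp add: phi_def G_def a_def L_def w_def cis_cnj)
    qed
    also have "\<dots> = complex_of_real (w (fst p)) * (cnj (\<Sum>m\<in>F. a p m) * (\<Sum>n\<in>F. a p n))"
      by (simp add: sum_distrib_left sum_distrib_right cnj_sum) (rule sum.swap)
    also have "\<dots> = complex_of_real (h p)"
      using complex_norm_square[of "\<Sum>n\<in>F. a p n"] by (simp add: h_def cnj_sum mult.commute)
    finally show ?thesis .
  qed
  have "(\<Sum>m\<in>F. \<Sum>n\<in>F. cnj (c m) * (K * (LINT p:S|lborel. phi k m n p)) * c n)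
      = K * (\<Sum>m\<in>F. \<Sum>n\<in>F. (LINT p:S|lborel. cnj (c m) * phi k m n p * c n))"
    by (simp add: sum_distrib_left set_integral_mult_right set_integral_mult_left algebra_simps)
  also have "(\<Sum>m\<in>F. \<Sum>n\<in>F. (LINT p:S|lborel. cnj (c m) * phi k m n p * c n))
      = (LINT p:S|lborel. (\<Sum>m\<in>F. \<Sum>n\<in>F. cnj (c m) * phi k m n p * c n))"
  proof -
    have ti: "integrable lborel (\<lambda>x. indicator S x *\<^sub>R (cnj (c m) * phi k m n x * c n))" for m n
    proof -
      have "set_integrable lborel S (\<lambda>x. cnj (c m) * phi k m n x * c n)"
        using int[of m n] by (intro set_integrable_mult_left set_integrable_mult_right) auto
      thus ?thesis unfolding set_integrable_def .
    qed
    have "(LINT p:S|lborel. (\<Sum>m\<in>F. \<Sum>n\<in>F. cnj (c m) * phi k m n p * c n))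
       = integral\<^sup>L lborel (\<lambda>x. \<Sum>m\<in>F. \<Sum>n\<in>F. indicator S x *\<^sub>R (cnj (c m) * phi k m n x * c n))"
      unfolding set_lebesgue_integral_def scaleR_sum_right ..
    also have "\<dots> = (\<Sum>m\<in>F. \<Sum>n\<in>F. integral\<^sup>L lborel (\<lambda>x. indicator S x *\<^sub>R (cnj (c m) * phi k m n x * c n)))"
      using ti by (simp add: integrable_sum)
    finally show ?thesis unfolding set_lebesgue_integral_def by simp
  qed
  also have "\<dots> = complex_of_real (LINT p:S|lborel. h p)"
    by (simp add: pw set_integral_complex_of_real)
  finally have eq: "(\<Sum>m\<in>F. \<Sum>n\<in>F. cnj (c m) * (K * (LINT p:S|lborel. phi k m n p)) * c n)
      = complex_of_real ((1/(2*pi)) * (LINT p:S|lborel. h p))"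
    by (simp add: K_def)
  have "0 \<le> (LINT p:S|lborel. h p)"
    unfolding set_lebesgue_integral_def
    by (intro integral_nonneg_AE AE_I2) (use S(2) in \<open>auto simp: h_def w_def indicator_def\<close>)
  thus "(\<Sum>m\<in>F. \<Sum>n\<in>F. cnj (c m) * (complex_of_real (1/(2*pi)) * (LINT p:S|lborel. phi k m n p)) * c n) \<in> \<real> \<and>
        0 \<le> Re (\<Sum>m\<in>F. \<Sum>n\<in>F. cnj (c m) * (complex_of_real (1/(2*pi)) * (LINT p:S|lborel. phi k m n p)) * c n)"
    using eq unfolding K_def by simp
qed



lemma shift_decomp:
  assumes T: "T \<subseteq> {0..<2*pi}" and c: "0 \<le> c" "c < 2*pi" and q: "\<theta> = c + 2*pi* of_int q"
  shows "shift_mod T \<theta> = {t. t - c \<in> T \<and> c \<le> t \<and> t < 2*pi} \<union> {t. t + (2*pi - c) \<in> T \<and> 0 \<le> t \<and> t < c}"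
proof (intro set_eqI iffI)
  fix t assume "t \<in> shift_mod T \<theta>"
  then obtain s j where t: "0 \<le> t" "t < 2*pi" and s: "s \<in> T" and j: "t = s + \<theta> + 2*pi* of_int (j::int)"
    unfolding shift_mod_def by auto
  have s0: "0 \<le> s" "s < 2*pi" using s T by auto
  define j' where "j' = j + q"
  have tj: "t = s + c + 2*pi* of_int j'" using j q unfolding j'_def by (simp add: algebra_simps)
  have h: "(2*pi) * real_of_int j' < (2*pi) * 1" "(2*pi) * (-2) < (2*pi) * real_of_int j'"
    using tj t s0 c by linarith+
  have p: "0 < 2*pi" by simp
  have "real_of_int j' < 1" "-2 < real_of_int j'" using h p mult_less_cancel_left_pos by blast+
  hence "j' = 0 \<or> j' = -1" by linarith
  thus "t \<in> {t. t - c \<in> T \<and> c \<le> t \<and> t < 2*pi} \<union> {t. t + (2*pi - c) \<in> T \<and> 0 \<le> t \<and> t < c}"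
  proof
    assume "j' = 0"
    hence "t = s + c" using tj by simp
    thus ?thesis using s s0 t by auto
  next
    assume "j' = -1"
    hence "t = s + c - 2*pi" using tj by simp
    thus ?thesis using s s0 t by auto
  qed
next
  fix t assume "t \<in> {t. t - c \<in> T \<and> c \<le> t \<and> t < 2*pi} \<union> {t. t + (2*pi - c) \<in> T \<and> 0 \<le> t \<and> t < c}"
  thus "t \<in> shift_mod T \<theta>"
  proof
    assume a: "t \<in> {t. t - c \<in> T \<and> c \<le> t \<and> t < 2*pi}"
    have "t = (t - c) + \<theta> + 2*pi* of_int (-q)" using q by simp
    thus ?thesis using a c unfolding shift_mod_def by (auto intro!: bexI[of _ "t - c"] exI[of _ "-q"])
  next
    assume a: "t \<in> {t. t + (2*pi - c) \<in> T \<and> 0 \<le> t \<and> t < c}"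
    have "t = (t + (2*pi - c)) + \<theta> + 2*pi* of_int (-q-1)" using q by (simp add: algebra_simps)
    thus ?thesis using a c unfolding shift_mod_def by (auto intro!: bexI[of _ "t + (2*pi - c)"] exI[of _ "-q-1"])
  qed
qed

lemma translate_meas: "T \<in> sets borel \<Longrightarrow> {t::real. t + a \<in> T} \<in> sets borel"
proof -
  assume T: "T \<in> sets borel"
  have "(\<lambda>t::real. t + a) \<in> borel_measurable borel"
    by (intro borel_measurable_continuous_onI continuous_intros)
  from measurable_sets[OF this T] show ?thesis by (simp add: vimage_def)
qed

lemma J_translate:
  fixes U :: "real set"
  assumes "\<And>s. (b + s \<in> U) = (s \<in> T')"
  shows "(LINT t:U|lborel. cis (t * of_int d)) = cis (b * of_int d) * (LINT s:T'|lborel. cis (s * of_int d))"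
proof -
  have "(LINT t:U|lborel. cis (t * of_int d)) = integral\<^sup>L lborel (\<lambda>t. indicator U t *\<^sub>R cis (t * of_int d))"
    unfolding set_lebesgue_integral_def ..
  also have "\<dots> = \<bar>1\<bar> *\<^sub>R integral\<^sup>L lborel (\<lambda>s. indicator U (b + 1 * s) *\<^sub>R cis ((b + 1 * s) * of_int d))"
    by (rule lborel_integral_real_affine) simp
  also have "(\<lambda>s. indicator U (b + 1 * s) *\<^sub>R cis ((b + 1 * s) * of_int d)) =
       (\<lambda>s. cis (b * of_int d) * (indicator T' s *\<^sub>R cis (s * of_int d)))"
    using assms by (auto simp: fun_eq_iff indicator_def cis_mult distrib_right)
  also have "\<bar>1\<bar> *\<^sub>R integral\<^sup>L lborel (\<lambda>s. cis (b * of_int d) * (indicator T' s *\<^sub>R cis (s * of_int d)))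
     = cis (b * of_int d) * integral\<^sup>L lborel (\<lambda>s. indicator T' s *\<^sub>R cis (s * of_int d))"
    by (simp only: abs_one scaleR_one integral_mult_right_zero)
  finally show ?thesis unfolding set_lebesgue_integral_def .
qed

lemma shift_J:
  assumes T: "T \<in> sets borel" "T \<subseteq> {0..<2*pi}"
  shows "shift_mod T \<theta> \<in> sets borel"
    and "(LINT t:shift_mod T \<theta>|lborel. cis (t * of_int d)) = cis (\<theta> * of_int d) * (LINT t:T|lborel. cis (t * of_int d))"
proof -
  define q where "q = \<lfloor>\<theta> / (2*pi)\<rfloor>"
  define c where "c = \<theta> - 2*pi* of_int q"
  have fl: "of_int q \<le> \<theta> / (2*pi)" "\<theta> / (2*pi) < of_int q + 1" unfolding q_def by linarith+
  have p: "0 < 2*pi" by simp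
  have "2*pi * of_int q \<le> \<theta>" "\<theta> < 2*pi * (of_int q + 1)"
    using fl p by (simp_all add: field_simps)
  hence c: "0 \<le> c" "c < 2*pi" unfolding c_def by (simp_all add: algebra_simps)
  have q: "\<theta> = c + 2*pi* of_int q" unfolding c_def by simp
  define U1 where "U1 = {t. t - c \<in> T \<and> c \<le> t \<and> t < 2*pi}"
  define U2 where "U2 = {t. t + (2*pi - c) \<in> T \<and> 0 \<le> t \<and> t < c}"
  have eq: "shift_mod T \<theta> = U1 \<union> U2" unfolding U1_def U2_def by (rule shift_decomp[OF T(2) c q])
  have U1m: "U1 \<in> sets borel"
  proof -
    have "U1 = {t. t + (- c) \<in> T} \<inter> {c..<2*pi}" unfolding U1_def by auto
    moreover have "{t. t - c \<in> T} \<in> sets borel" using translate_meas[OF T(1), of "-c"] by simp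
    ultimately show ?thesis by auto
  qed
  have U2m: "U2 \<in> sets borel"
  proof -
    have "U2 = {t. t + (2*pi - c) \<in> T} \<inter> {0..<c}" unfolding U2_def by auto
    moreover have "{t. t + (2*pi - c) \<in> T} \<in> sets borel" using translate_meas[OF T(1), of "2*pi - c"] by simp
    ultimately show ?thesis by auto
  qed
  show "shift_mod T \<theta> \<in> sets borel" unfolding eq using U1m U2m by auto
  define T1 where "T1 = T \<inter> {..<2*pi - c}"
  define T2 where "T2 = T \<inter> {2*pi - c..}"
  have T1m: "T1 \<in> sets borel" and T2m: "T2 \<in> sets borel" unfolding T1_def T2_def using T by auto
  have "(LINT t:shift_mod T \<theta>|lborel. cis (t * of_int d)) = (LINT t:U1|lborel. cis (t * of_int d)) + (LINT t:U2|lborel. cis (t * of_int d))"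
  proof -
    have d: "U1 \<inter> U2 = {}" by (auto simp: U1_def U2_def)
    have s: "U1 \<subseteq> {0..2*pi}" "U2 \<subseteq> {0..2*pi}" using c by (auto simp: U1_def U2_def)
    show ?thesis unfolding eq
      by (rule set_integral_Un[OF d cis_int[OF U1m s(1)] cis_int[OF U2m s(2)]])
  qed
  also have "(LINT t:U1|lborel. cis (t * of_int d)) = cis (c * of_int d) * (LINT s:T1|lborel. cis (s * of_int d))"
    by (rule J_translate) (use T(2) in \<open>auto simp: U1_def T1_def\<close>)
  also have "(LINT t:U2|lborel. cis (t * of_int d)) = cis ((c - 2*pi) * of_int d) * (LINT s:T2|lborel. cis (s * of_int d))"
    by (rule J_translate) (use T(2) in \<open>auto simp: U2_def T2_def\<close>)
  also have "cis ((c - 2*pi) * of_int d) = cis (c * of_int d)"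
  proof -
    have "cis ((c - 2*pi) * of_int d) = cis (c * of_int d) * cis (2 * pi * of_int (-d))"
      by (simp add: cis_mult algebra_simps)
    moreover have "cis (2 * pi * real_of_int (-d)) = 1" by (rule cis_multiple_2pi) (rule Ints_of_int)
    ultimately show ?thesis by (simp only: mult_1_right)
  qed
  also have "cis (c * of_int d) * (LINT s:T1|lborel. cis (s * of_int d)) + cis (c * of_int d) * (LINT s:T2|lborel. cis (s * of_int d))
      = cis (c * of_int d) * (LINT s:T|lborel. cis (s * of_int d))"
  proof -
    have "T = T1 \<union> T2" "T1 \<inter> T2 = {}" unfolding T1_def T2_def by auto
    hence "(LINT s:T|lborel. cis (s * of_int d)) = (LINT s:T1|lborel. cis (s * of_int d)) + (LINT s:T2|lborel. cis (s * of_int d))"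
      using T T1m T2m by (metis set_integral_Un cis_int Un_upper1 Un_upper2 atLeastLessThan_subseteq_atLeastAtMost_iff order.trans order_refl)
    thus ?thesis by (simp add: distrib_left)
  qed
  also have "cis (c * of_int d) = cis (\<theta> * of_int d)"
  proof -
    have "cis (\<theta> * of_int d) = cis (c * of_int d) * cis (2 * pi * of_int (q * d))"
      by (simp add: q cis_mult algebra_simps)
    moreover have "cis (2 * pi * real_of_int (q * d)) = 1" by (rule cis_multiple_2pi) (rule Ints_of_int)
    ultimately show ?thesis by (simp only: mult_1_right)
  qed
  finally show "(LINT t:shift_mod T \<theta>|lborel. cis (t * of_int d)) = cis (\<theta> * of_int d) * (LINT t:T|lborel. cis (t * of_int d))" .
qed



lemma Jf: "(LINT t:{0..<2*pi}|lborel. cis (t * of_int (int m - int n))) = (if m = n then 2*pi else 0)"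
  using J_full[of "int m - int n"] by simp

lemma K2pi: "complex_of_real (1/(2*pi)) * complex_of_real (2*pi) = 1"
  by (simp flip: of_real_mult)

lemma Fk_UNIV: "Fk k UNIV m n = (if m = n then 1 else 0)"
proof -
  have "SZ UNIV = {0..} \<times> {0..<2*pi}" by (auto simp: SZ_def)
  hence "Fk k UNIV m n = complex_of_real (1/(2*pi)) * (LINT p:({0..} \<times> {0..<2*pi})|lborel. phi k m n p)"
    by (simp add: Fk_alt)
  also have "(LINT p:({0..} \<times> {0..<2*pi})|lborel. phi k m n p) =
     (LINT t:{0..<2*pi}|lborel. cis (t * of_int (int m - int n))) * complex_of_real (LINT r:{0..}|lborel. G (min m k) (min n k) r)"
    unfolding phi_def
    by (rule set_prod_int(2)[OF G_integrable cis_int[where a=0 and b="2*pi"]]) auto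
  finally show ?thesis by (simp only: Jf G_orth) (auto simp: K2pi)
qed

lemma Fk_full_angle: "Fk k (polar {0..} {0..<2*pi}) m n = (if m = n then 1 else 0)"
proof -
  have "Fk k (polar {0..} {0..<2*pi}) m n = complex_of_real (1/(2*pi)) * (LINT t:{0..<2*pi}|lborel. cis (t * of_int (int m - int n)))
             * complex_of_real (LINT r:{0..}|lborel. G (min m k) (min n k) r)"
    by (rule Fk_polar) auto
  thus ?thesis by (simp only: Jf G_orth) (auto simp: K2pi)
qed

theorem mainTheorem8:
  fixes k :: nat
  shows "cov_phase_space_obs (Fk k)
    \<and> cov_phase_obs (\<lambda>\<Theta>. Fk k (polar {0..} \<Theta>))
    \<and> (\<forall>\<Theta> m n. \<Theta> \<in> sets borel \<longrightarrow> \<Theta> \<subseteq> {0..<2*pi} \<longrightarrow>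
         Fk k (polar {0..} \<Theta>) m n
           = (if min m k = min n k then 1 else 0) * complex_of_real (1 / (2*pi)) *
             (LINT t:\<Theta>|lborel. cis (t * of_int (int m - int n))))
    \<and> (\<forall>\<Theta> m n. \<Theta> \<in> sets borel \<longrightarrow> \<Theta> \<subseteq> {0..<2*pi} \<longrightarrow>
         Fk 0 (polar {0..} \<Theta>) m n = E_can \<Theta> m n)
    \<and> (\<forall>X m n. X \<in> sets borel \<longrightarrow> X \<subseteq> {0..} \<longrightarrow>
         Fk k (polar X {0..<2*pi}) m n
           = (if m = n then complex_of_real (if m \<le> k then cdiag m X else cdiag k X) else 0))"
proof (intro conjI allI impI)
  have angle: "Fk k' (polar {0..} T) m n
           = (if min m k' = min n k' then 1 else 0) * complex_of_real (1 / (2*pi)) *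
             (LINT t:T|lborel. cis (t * of_int (int m - int n)))"
    if T: "T \<in> sets borel" "T \<subseteq> {0..<2*pi}" for T m n k'
    by (subst Fk_polar) (use T in \<open>auto simp: G_orth\<close>)
  show "cov_phase_space_obs (Fk k)"
    unfolding cov_phase_space_obs_def povm_def
  proof (intro conjI ballI allI impI)
    fix A :: "complex set" assume A: "A \<in> sets borel"
    have "Fk k A = (\<lambda>m n. complex_of_real (1/(2*pi)) * (LINT p:SZ A|lborel. phi k m n p))"
      by (simp add: fun_eq_iff Fk_alt)
    thus "psd_matrix (Fk k A)" using psd_int[OF SZ_meas[OF A] SZ_sub] by simp
  next
    fix m n
    show "Fk k (space borel) m n = (if m = n then 1 else 0)" by (simp add: Fk_UNIV)
  next
    fix B :: "nat \<Rightarrow> complex set" and m n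
    assume B: "range B \<subseteq> sets borel" and dj: "disjoint_family B"
    have SU: "SZ (\<Union>i. B i) = (\<Union>i. SZ (B i))" by (auto simp: SZ_def)
    have Sm: "SZ (B i) \<in> sets lborel" for i using B by (intro SZ_meas) auto
    have Sd: "disjoint_family (\<lambda>i. SZ (B i))" using dj by (auto simp: disjoint_family_on_def SZ_def)
    have Si: "set_integrable lborel (\<Union>i. SZ (B i)) (phi k m n)"
      by (rule set_integrable_subset[OF phi_int_D]) (use Sm SZ_sub in auto)
    have "(\<lambda>i. LINT p:SZ (B i)|lborel. phi k m n p) sums (LINT p:(\<Union>i. SZ (B i))|lborel. phi k m n p)"
      by (rule set_integral_sums[OF Sm Sd Si])
    hence "(\<lambda>i. complex_of_real (1/(2*pi)) * (LINT p:SZ (B i)|lborel. phi k m n p)) sums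
           (complex_of_real (1/(2*pi)) * (LINT p:(\<Union>i. SZ (B i))|lborel. phi k m n p))"
      by (rule sums_mult)
    thus "(\<lambda>i. Fk k (B i) m n) sums Fk k (\<Union>i. B i) m n" by (simp add: Fk_alt SU)
  next
    fix X T :: "real set" and \<theta> :: real and m n :: nat
    assume X: "X \<in> sets borel" "X \<subseteq> {0..}" and T: "T \<in> sets borel" "T \<subseteq> {0..<2*pi}"
    have sT: "shift_mod T \<theta> \<in> sets borel" "shift_mod T \<theta> \<subseteq> {0..<2*pi}"
      using shift_J(1)[OF T] by (auto simp: shift_mod_def)
    show "Fk k (polar X (shift_mod T \<theta>)) m n = cis (\<theta> * of_int (int m - int n)) * Fk k (polar X T) m n"
      by (simp only: Fk_polar[OF X sT] Fk_polar[OF X T] shift_J(2)[OF T]) (simp add: ac_simps)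
  qed
  have Om: "{0..<2*pi} \<inter> space borel \<in> sets (borel :: real measure)" by simp
  show "cov_phase_obs (\<lambda>\<Theta>. Fk k (polar {0..} \<Theta>))"
    unfolding cov_phase_obs_def povm_def
  proof (intro conjI ballI allI impI)
    fix A :: "real set" assume "A \<in> sets (restrict_space borel {0..<2*pi})"
    hence A: "A \<in> sets borel" "A \<subseteq> {0..<2*pi}" using sets_restrict_space_iff[OF Om] by auto
    have "Fk k (polar {0..} A) = (\<lambda>m n. complex_of_real (1/(2*pi)) * (LINT p:SZ (polar {0..} A)|lborel. phi k m n p))"
      by (simp add: fun_eq_iff Fk_alt)
    thus "psd_matrix (Fk k (polar {0..} A))"
      using psd_int[OF SZ_polar_meas[OF _ _ A] SZ_sub] by simp
  next
    fix m n
    show "Fk k (polar {0..} (space (restrict_space borel {0..<2*pi}))) m n = (if m = n then 1 else 0)"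
      by (simp add: Fk_full_angle)
  next
    fix B :: "nat \<Rightarrow> real set" and m n
    assume B: "range B \<subseteq> sets (restrict_space borel {0..<2*pi})" and dj: "disjoint_family B"
    have Bm: "B i \<in> sets borel" "B i \<subseteq> {0..<2*pi}" for i using B sets_restrict_space_iff[OF Om] by auto
    have UBm: "(\<Union>i. B i) \<in> sets borel" "(\<Union>i. B i) \<subseteq> {0..<2*pi}" using Bm by auto
    define C where "C = (if min m k = min n k then 1 else 0) * complex_of_real (1 / (2*pi))"
    have "(\<lambda>i. LINT t:B i|lborel. cis (t * of_int (int m - int n))) sums (LINT t:(\<Union>i. B i)|lborel. cis (t * of_int (int m - int n)))"
      by (rule set_integral_sums) (use Bm dj UBm in \<open>auto intro!: cis_int[where a=0 and b="2*pi"]\<close>)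
    hence "(\<lambda>i. C * (LINT t:B i|lborel. cis (t * of_int (int m - int n)))) sums (C * (LINT t:(\<Union>i. B i)|lborel. cis (t * of_int (int m - int n))))"
      by (rule sums_mult)
    thus "(\<lambda>i. Fk k (polar {0..} (B i)) m n) sums Fk k (polar {0..} (\<Union>i. B i)) m n"
      by (simp add: angle[OF Bm] angle[OF UBm] C_def)
  next
    fix T \<theta> m n
    assume T: "T \<in> sets borel" "T \<subseteq> {0..<2*pi}"
    have sT: "shift_mod T \<theta> \<in> sets borel" "shift_mod T \<theta> \<subseteq> {0..<2*pi}"
      using shift_J(1)[OF T] by (auto simp: shift_mod_def)
    show "Fk k (polar {0..} (shift_mod T \<theta>)) m n = cis (\<theta> * of_int (int m - int n)) * Fk k (polar {0..} T) m n"
      by (simp only: angle[OF sT] angle[OF T] shift_J(2)[OF T]) (simp add: ac_simps)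
  qed
  fix T m n
  assume T: "T \<in> sets borel" "T \<subseteq> {0..<2*pi}"
  show "Fk k (polar {0..} T) m n
           = (if min m k = min n k then 1 else 0) * complex_of_real (1 / (2*pi)) *
             (LINT t:T|lborel. cis (t * of_int (int m - int n)))"
    by (rule angle[OF T])
next
  fix T m n
  assume T: "T \<in> sets borel" "T \<subseteq> {0..<2*pi}"
  have "Fk 0 (polar {0..} T) m n = complex_of_real (1 / (2*pi)) * (LINT t:T|lborel. cis (t * of_int (int m - int n)))"
    using Fk_polar[OF _ _ T, of "{0..}" 0 m n] by (simp add: G_orth)
  thus "Fk 0 (polar {0..} T) m n = E_can T m n"
    unfolding E_can_def by (simp add: mult.commute)
next
  fix X :: "real set" and m n :: nat
  assume X: "X \<in> sets borel" "X \<subseteq> {0..}"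
  have cd: "(LINT r:X|lborel. G a a r) = cdiag a X" for a
    unfolding cdiag_def G_def by (simp add: power2_eq_square)
  show "Fk k (polar X {0..<2*pi}) m n
           = (if m = n then complex_of_real (if m \<le> k then cdiag m X else cdiag k X) else 0)"
  proof -
    have "Fk k (polar X {0..<2*pi}) m n = complex_of_real (1/(2*pi)) * (if m = n then complex_of_real (2*pi) else 0)
             * complex_of_real (LINT r:X|lborel. G (min m k) (min n k) r)"
      using Fk_polar[OF X, of "{0..<2*pi}" k m n] by (simp only: Jf) auto
    also have "\<dots> = (if m = n then complex_of_real (if m \<le> k then cdiag m X else cdiag k X) else 0)"
      by (cases "m = n") (auto simp: K2pi cd min_def)
    finally show ?thesis .
  qed
qed

end
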